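(* Let $y>3$. Then for every integer $k$ with $1\le k\le\log(y)/3$, \[\sum_{m=1}^\infty d_k(m)e^{-m/y}\ll y(\log(3y))^{k+2}.\]
   Context: $d_k$ is the $k$-fold divisor function, i.e. the multiplicative function with $d_k(p^\nu)=\Gamma(k+\nu)/(\Gamma(k)\nu!)$, the Dirichlet coefficients of $\zeta(s)^k$. *)

theory Defs
  imports "HOL-Analysis.Analysis" "HOL-Computational_Algebra.Primes"
begin

text \<open>The k-fold divisor function: multiplicative, with
  d_k(p^v) = Gamma(k+v)/(Gamma(k) v!) = (k+v-1 gchoose v).\<close>
definition divisor_k :: "real \<Rightarrow> nat \<Rightarrow> real" where
  "divisor_k k n = (\<Prod>p\<in>prime_factors n. (k + real (multiplicity p n) - 1) gchoose (multiplicity p n))"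

end

theory Submission
  imports Defs "HOL-Library.FuncSet"
begin
lemma zeta_step:
  fixes s :: real and L :: nat
  assumes "s > 1" "L \<ge> 1"
  shows "real (Suc L) powr (-s) \<le> (real L powr (1-s) - real (Suc L) powr (1-s)) / (s - 1)"
proof -
  have "\<exists>z>real L. z < real (Suc L) \<and> real (Suc L) powr (1-s) - real L powr (1-s) = (real (Suc L) - real L) * ((1-s) * z powr (1-s-1))"
    apply (rule MVT2)
    using assms by (auto intro!: derivative_eq_intros)
  then obtain z where z: "z > real L" "z < real (Suc L)" "real (Suc L) powr (1-s) - real L powr (1-s) = (1-s) * z powr (-s)"
    by auto
  have "real (Suc L) powr (-s) \<le> z powr (-s)"
    using z assms by (intro powr_mono2') auto
  then have "(s-1) * real (Suc L) powr (-s) \<le> (s-1) * z powr (-s)"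
    using assms by (intro mult_left_mono) auto
  also have "\<dots> = real L powr (1-s) - real (Suc L) powr (1-s)" using z(3) by (simp add: algebra_simps)
  finally show ?thesis using assms by (simp add: pos_le_divide_eq mult.commute)
qed

lemma zeta_partial:
  fixes s :: real
  assumes "s > 1"
  shows "(\<Sum>n=1..L. real n powr (-s)) \<le> 1 + (1 - real L powr (1-s)) / (s-1) \<or> L = 0"
proof (induction L)
  case 0 then show ?case by simp
next
  case (Suc L)
  show ?case
  proof (cases "L = 0")
    case True then show ?thesis by simp
  next
    case False
    then have IH: "(\<Sum>n=1..L. real n powr (-s)) \<le> 1 + (1 - real L powr (1-s)) / (s-1)" using Suc by auto
    have "(\<Sum>n=1..Suc L. real n powr (-s)) = (\<Sum>n=1..L. real n powr (-s)) + real (Suc L) powr (-s)" by simp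
    also have "\<dots> \<le> 1 + (1 - real L powr (1-s)) / (s-1) + (real L powr (1-s) - real (Suc L) powr (1-s)) / (s - 1)"
      using IH zeta_step[OF assms, of L] False by linarith
    also have "\<dots> = 1 + (1 - real (Suc L) powr (1-s)) / (s-1)" by (simp add: diff_divide_distrib)
    finally show ?thesis by blast
  qed
qed

lemma zeta_bound:
  fixes s :: real
  assumes "s > 1"
  shows "(\<Sum>n=1..L. real n powr (-s)) \<le> 1 + 1 / (s-1)"
proof (cases "L = 0")
  case True then show ?thesis using assms by simp
next
  case False
  then have "(\<Sum>n=1..L. real n powr (-s)) \<le> 1 + (1 - real L powr (1-s)) / (s-1)" using zeta_partial[OF assms, of L] by auto
  also have "\<dots> \<le> 1 + 1 / (s-1)" using assms by (intro add_left_mono divide_right_mono) auto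
  finally show ?thesis .
qed

lemma powr_pow_swap:
  fixes x s :: real assumes "x > 0"
  shows "(x ^ j) powr s = (x powr s) ^ j"
  using assms by (simp add: powr_def ln_realpow exp_of_nat_mult[symmetric] algebra_simps)

lemma euler_partial:
  fixes s :: real
  assumes s: "s > 1" and P: "finite P" "\<And>p. p \<in> P \<Longrightarrow> prime p"
  shows "(\<Prod>p\<in>P. \<Sum>j<M. (real p powr (-s)) ^ j) \<le> 1 + 1 / (s-1)"
proof -
  define A where "A = PiE P (\<lambda>_. {..<M})"
  define h where "h = (\<lambda>g. \<Prod>p\<in>P. p ^ g p)"
  have finA: "finite A" unfolding A_def using P by (intro finite_PiE) auto
  have "(\<Prod>p\<in>P. \<Sum>j<M. (real p powr (-s)) ^ j) = (\<Sum>g\<in>A. \<Prod>p\<in>P. (real p powr (-s)) ^ g p)"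
    unfolding A_def by (rule prod_sum_PiE) (use P in auto)
  also have "\<dots> = (\<Sum>g\<in>A. real (h g) powr (-s))"
  proof (intro sum.cong refl)
    fix g assume "g \<in> A"
    have "real (h g) powr (-s) = (\<Prod>p\<in>P. real p ^ g p) powr (-s)" unfolding h_def by simp
    also have "\<dots> = (\<Prod>p\<in>P. (real p ^ g p) powr (-s))" by (rule prod_powr_distrib)
    also have "\<dots> = (\<Prod>p\<in>P. (real p powr (-s)) ^ g p)"
      using P by (intro prod.cong refl powr_pow_swap) (auto simp: prime_gt_0_nat)
    finally show "(\<Prod>p\<in>P. (real p powr (-s)) ^ g p) = real (h g) powr (-s)" by simp
  qed
  also have "\<dots> = (\<Sum>n\<in>h ` A. real n powr (-s))"
  proof (rule sum.reindex[symmetric, unfolded comp_def])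
    show "inj_on h A"
    proof
      fix g1 g2 assume g: "g1 \<in> A" "g2 \<in> A" "h g1 = h g2"
      show "g1 = g2"
      proof (rule PiE_ext[OF g(1)[unfolded A_def] g(2)[unfolded A_def]])
        fix q assume q: "q \<in> P"
        have "multiplicity q (h g1) = g1 q" unfolding h_def
          using P q by (subst multiplicity_prod_prime_powers) auto
        moreover have "multiplicity q (h g2) = g2 q" unfolding h_def
          using P q by (subst multiplicity_prod_prime_powers) auto
        ultimately show "g1 q = g2 q" using g(3) by simp
      qed
    qed
  qed
  also have "\<dots> \<le> (\<Sum>n=1..Max (h ` A). real n powr (-s))"
  proof (rule sum_mono2)
    show "h ` A \<subseteq> {1..Max (h ` A)}"
    proof
      fix n assume n: "n \<in> h ` A"
      have "n \<noteq> 0" using n P unfolding h_def by (auto simp: prime_gt_0_nat)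
      moreover have "n \<le> Max (h ` A)" using n finA by auto
      ultimately show "n \<in> {1..Max (h ` A)}" by auto
    qed
  qed auto
  also have "\<dots> \<le> 1 + 1 / (s-1)" by (rule zeta_bound[OF s])
  finally show ?thesis .
qed

lemma prime_powr_bounds:
  fixes s :: real assumes "s > 0" "prime (p::nat)"
  shows "0 < real p powr (-s)" "real p powr (-s) < 1"
proof -
  have p: "real p > 1" using assms prime_gt_1_nat by auto
  show "0 < real p powr (-s)" using p by simp
  show "real p powr (-s) < 1" using p assms by (simp add: powr_less_one)
qed

lemma euler_prod:
  fixes s :: real
  assumes s: "s > 1" and P: "finite P" "\<And>p. p \<in> P \<Longrightarrow> prime p"
  shows "(\<Prod>p\<in>P. 1 / (1 - real p powr (-s))) \<le> 1 + 1 / (s-1)"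
proof (rule LIMSEQ_le_const2)
  show "(\<lambda>M. \<Prod>p\<in>P. \<Sum>j<M. (real p powr (-s)) ^ j) \<longlonglongrightarrow> (\<Prod>p\<in>P. 1 / (1 - real p powr (-s)))"
  proof (rule tendsto_prod)
    fix p assume "p \<in> P"
    then have "norm (real p powr (-s)) < 1" using prime_powr_bounds[of s p] s P by auto
    from geometric_sums[OF this] show "(\<lambda>M. \<Sum>j<M. (real p powr (-s)) ^ j) \<longlonglongrightarrow> 1 / (1 - real p powr (-s))"
      by (simp add: sums_def)
  qed
  show "\<exists>N. \<forall>n\<ge>N. (\<Prod>p\<in>P. \<Sum>j<n. (real p powr (-s)) ^ j) \<le> 1 + 1 / (s-1)"
    using euler_partial[OF s P] by blast
qed

lemma gchoose_nonneg:
  fixes a :: real assumes "a \<ge> real n - 1"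
  shows "0 \<le> a gchoose n"
  unfolding gbinomial_prod_rev using assms by (auto intro!: divide_nonneg_pos prod_nonneg)

lemma binom_series_bound:
  fixes x :: real and k :: nat
  assumes x: "0 \<le> x" "x < 1" and k: "k \<ge> 1"
  shows "(\<Sum>j<M. ((real k + real j - 1) gchoose j) * x ^ j) \<le> (1 / (1 - x)) ^ k"
proof -
  have "\<bar>-x\<bar> < 1" using x by simp
  from gen_binomial_real[OF this, of "- real k"]
  have "(\<lambda>n. (- real k gchoose n) * (- x) ^ n) sums (1 + - x) powr (- real k)" .
  moreover have "(- real k gchoose n) * (- x) ^ n = ((real k + real n - 1) gchoose n) * x ^ n" for n
  proof -
    have "(- real k gchoose n) = (-1) ^ n * ((real n + real k - 1) gchoose n)"
      by (subst gbinomial_negated_upper) simp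
    then show ?thesis by (simp add: power_minus' add.commute)
  qed
  moreover have "(1 + - x) powr (- real k) = (1 / (1 - x)) ^ k"
    using x by (simp add: powr_minus powr_realpow divide_inverse power_inverse)
  ultimately have S: "(\<lambda>n. ((real k + real n - 1) gchoose n) * x ^ n) sums (1 / (1 - x)) ^ k" by simp
  show ?thesis unfolding sums_unique[OF S]
    using S k x by (intro sum_le_suminf) (auto simp: sums_summable intro!: mult_nonneg_nonneg gchoose_nonneg)
qed

lemma prod_over_superset_primes:
  fixes m :: nat and P :: "nat set" and G :: "nat \<Rightarrow> nat \<Rightarrow> 'a::comm_monoid_mult"
  assumes "m > 0" "finite P" "prime_factors m \<subseteq> P" "\<And>p. G p 0 = 1" "\<And>p. p \<in> P \<Longrightarrow> prime p"
  shows "(\<Prod>p\<in>prime_factors m. G p (multiplicity p m)) = (\<Prod>p\<in>P. G p (multiplicity p m))"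
proof (rule prod.mono_neutral_left[OF assms(2,3)])
  show "\<forall>i\<in>P - prime_factors m. G i (multiplicity i m) = 1"
  proof
    fix p assume p: "p \<in> P - prime_factors m"
    have "multiplicity p m = 0"
    proof -
      have "prime p" using p assms(5) by auto
      then have "\<not> p dvd m" using p assms(1) by (auto simp: in_prime_factors_iff)
      then show ?thesis by (rule not_dvd_imp_multiplicity_0)
    qed
    then show "G p (multiplicity p m) = 1" using assms(4) by simp
  qed
qed

lemma dk_dirichlet:
  fixes s :: real and k :: nat
  assumes s: "s > 1" and k: "k \<ge> 1"
  shows "(\<Sum>m=1..N. divisor_k (real k) m * real m powr (-s)) \<le> (1 + 1/(s-1)) ^ k"
proof -
  define P where "P = {p. prime p \<and> p \<le> N}"
  have finP: "finite P" unfolding P_def by auto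
  have primeP: "\<And>p. p \<in> P \<Longrightarrow> prime p" unfolding P_def by auto
  define x where "x = (\<lambda>p::nat. real p powr (-s))"
  have x01: "0 < x p" "x p < 1" if "p \<in> P" for p
    using prime_powr_bounds[of s p] s primeP[OF that] unfolding x_def by auto
  define F where "F = (\<lambda>p j. ((real k + real j - 1) gchoose j) * x p ^ j)"
  have Fnn: "0 \<le> F p j" if "p \<in> P" for p j
    unfolding F_def using x01[OF that] k by (auto intro!: mult_nonneg_nonneg gchoose_nonneg)
  define v where "v = (\<lambda>m. restrict (\<lambda>p. multiplicity p m) P)"
  have pfP: "prime_factors m \<subseteq> P" if "m \<in> {1..N}" for m
  proof
    fix p assume "p \<in> prime_factors m"
    then have "prime p" "p dvd m" by (auto simp: in_prime_factors_iff)
    moreover have "p \<le> m" using \<open>p dvd m\<close> that by (intro dvd_imp_le) auto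
    ultimately show "p \<in> P" using that unfolding P_def by auto
  qed
  have mprod: "m = (\<Prod>p\<in>P. p ^ v m p)" if "m \<in> {1..N}" for m
  proof -
    have "m = (\<Prod>p\<in>prime_factors m. p ^ multiplicity p m)"
      using prod_prime_factors[of m] that by simp
    also have "\<dots> = (\<Prod>p\<in>P. p ^ multiplicity p m)"
      by (rule prod_over_superset_primes[of m P "\<lambda>p j. p ^ j"]) (use that finP pfP primeP in auto)
    also have "\<dots> = (\<Prod>p\<in>P. p ^ v m p)" unfolding v_def by simp
    finally show ?thesis .
  qed
  have termeq: "divisor_k (real k) m * real m powr (-s) = (\<Prod>p\<in>P. F p (v m p))" if m: "m \<in> {1..N}" for m
  proof -
    have "divisor_k (real k) m = (\<Prod>p\<in>P. (real k + real (multiplicity p m) - 1) gchoose (multiplicity p m))"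
      unfolding divisor_k_def
      by (rule prod_over_superset_primes[of m P "\<lambda>p j. (real k + real j - 1) gchoose j"]) (use m finP pfP primeP in auto)
    moreover have "real m powr (-s) = (\<Prod>p\<in>P. x p ^ v m p)"
    proof -
      have "real m powr (-s) = (\<Prod>p\<in>P. real p ^ v m p) powr (-s)"
        by (subst mprod[OF m]) simp
      also have "\<dots> = (\<Prod>p\<in>P. (real p ^ v m p) powr (-s))" by (rule prod_powr_distrib)
      also have "\<dots> = (\<Prod>p\<in>P. x p ^ v m p)" unfolding x_def
        using primeP by (intro prod.cong refl powr_pow_swap) (auto simp: prime_gt_0_nat)
      finally show ?thesis .
    qed
    ultimately show ?thesis unfolding F_def v_def by (simp add: prod.distrib)
  qed
  have injv: "inj_on v {1..N}"
  proof
    fix m1 m2 assume "m1 \<in> {1..N}" "m2 \<in> {1..N}" "v m1 = v m2"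
    then show "m1 = m2" using mprod[of m1] mprod[of m2] by simp
  qed
  have vsub: "v ` {1..N} \<subseteq> PiE P (\<lambda>_. {..<Suc N})"
  proof
    fix g assume "g \<in> v ` {1..N}"
    then obtain m where m: "m \<in> {1..N}" "g = v m" by auto
    have "multiplicity p m \<le> N" if "p \<in> P" for p
    proof -
      have p2: "p \<ge> 2" using primeP[OF that] prime_ge_2_nat by auto
      have "multiplicity p m < 2 ^ multiplicity p m" by (rule less_exp)
      also have "\<dots> \<le> p ^ multiplicity p m" using p2 by (intro power_mono) auto
      also have "\<dots> \<le> m" using m by (intro dvd_imp_le multiplicity_dvd) auto
      finally show ?thesis using m by auto
    qed
    then show "g \<in> PiE P (\<lambda>_. {..<Suc N})" unfolding m v_def by (auto simp: less_Suc_eq_le)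
  qed
  have "(\<Sum>m=1..N. divisor_k (real k) m * real m powr (-s)) = (\<Sum>m=1..N. \<Prod>p\<in>P. F p (v m p))"
    by (intro sum.cong refl termeq) auto
  also have "\<dots> = (\<Sum>g\<in>v ` {1..N}. \<Prod>p\<in>P. F p (g p))"
    by (rule sum.reindex[OF injv, symmetric, unfolded comp_def])
  also have "\<dots> \<le> (\<Sum>g\<in>PiE P (\<lambda>_. {..<Suc N}). \<Prod>p\<in>P. F p (g p))"
    by (rule sum_mono2[OF _ vsub]) (use finP Fnn in \<open>auto intro!: finite_PiE prod_nonneg\<close>)
  also have "\<dots> = (\<Prod>p\<in>P. \<Sum>j<Suc N. F p j)"
    by (rule prod_sum_PiE[symmetric]) (use finP in auto)
  also have "\<dots> \<le> (\<Prod>p\<in>P. (1 / (1 - x p)) ^ k)"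
    using Fnn x01 k unfolding F_def
    by (intro prod_mono conjI sum_nonneg binom_series_bound) (auto simp: F_def less_imp_le)
  also have "\<dots> = (\<Prod>p\<in>P. 1 / (1 - x p)) ^ k" by (rule prod_power_distrib[symmetric])
  also have "\<dots> \<le> (1 + 1/(s-1)) ^ k"
    using x01 euler_prod[OF s finP primeP] unfolding x_def
    by (intro power_mono prod_nonneg) (auto simp: less_imp_le)
  finally show ?thesis .
qed

lemma exp_powr_bound:
  fixes t s :: real assumes t: "t > 0" and s: "1 \<le> s" "s \<le> 2"
  shows "exp (-t) \<le> 4 * t powr (-s)"
proof -
  have "t powr s \<le> 4 * exp t"
  proof (cases "t \<le> 1")
    case True
    have "t powr s \<le> 1" using True t s by (intro powr_le1) auto
    also have "1 \<le> exp t" using t by simp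
    finally show ?thesis using exp_gt_zero[of t] by linarith
  next
    case False
    have "t powr s \<le> t powr 2" using False s by (intro powr_mono) auto
    also have "\<dots> = t ^ 2" using t by (simp add: powr_realpow)
    also have "\<dots> \<le> 4 * (1 + t/2) ^ 2" using t by (simp add: power2_eq_square algebra_simps)
    also have "(1 + t/2) ^ 2 \<le> exp (t/2) ^ 2" using t by (intro power_mono exp_ge_add_one_self) auto
    also have "exp (t/2) ^ 2 = exp t" by (simp add: power2_eq_square exp_add[symmetric])
    finally show ?thesis by simp
  qed
  then have "exp (-t) * t powr s \<le> 4" using t by (simp add: exp_minus field_simps)
  then show ?thesis using t by (simp add: powr_minus field_simps)
qed

lemma divisor_k_nonneg: "k \<ge> 1 \<Longrightarrow> 0 \<le> divisor_k (real k) m"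
  unfolding divisor_k_def by (auto intro!: prod_nonneg gchoose_nonneg)

lemma shift_sum_lt: "(\<Sum>i<n. f (Suc i)) = (\<Sum>m=1..n. (f m :: real))"
  by (induction n) auto

lemma shift_sum_le: "(\<Sum>i\<le>n. f (Suc i)) = (\<Sum>m=1..Suc n. (f m :: real))"
  by (induction n) auto

theorem lemma18:
  shows "\<exists>C>0. \<forall>y::real. y > 3 \<longrightarrow> (\<forall>k::nat. 1 \<le> k \<and> real k \<le> ln y / 3 \<longrightarrow>
     summable (\<lambda>m. divisor_k (real k) (Suc m) * exp (- real (Suc m) / y)) \<and>
     (\<Sum>m. divisor_k (real k) (Suc m) * exp (- real (Suc m) / y)) \<le> C * y * (ln (3 * y)) ^ (k + 2))"
proof (intro exI[of _ 12] conjI allI impI)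
  fix y :: real and k :: nat
  assume y: "y > 3" and kk: "1 \<le> k \<and> real k \<le> ln y / 3"
  then have k: "k \<ge> 1" by auto
  define L where "L = ln y"
  have e3: "exp 1 < (3::real)" using e_less_272 by simp
  have L1: "L > 1"
  proof -
    have "exp 1 < y" using e3 y by simp
    then have "ln (exp 1) < ln y" using y by (subst ln_less_cancel_iff) auto
    then show ?thesis unfolding L_def by simp
  qed
  define s where "s = 1 + 1 / L"
  have s1: "s > 1" "s \<le> 2" using L1 unfolding s_def by (auto simp: field_simps)
  define B where "B = 4 * y powr s * (1 + L) ^ k"
  define a where "a = (\<lambda>m::nat. divisor_k (real k) m * exp (- real m / y))"
  have anneg: "0 \<le> a m" for m unfolding a_def using divisor_k_nonneg[OF k] by simp
  have bound: "(\<Sum>m=1..N. a m) \<le> B" for N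
  proof -
    have "(\<Sum>m=1..N. a m) \<le> (\<Sum>m=1..N. 4 * y powr s * (divisor_k (real k) m * real m powr (-s)))"
    proof (intro sum_mono)
      fix m assume m: "m \<in> {1..N}"
      have "exp (- (real m / y)) \<le> 4 * (real m / y) powr (-s)"
        using m y s1 by (intro exp_powr_bound) auto
      also have "(real m / y) powr (-s) = y powr s * real m powr (-s)"
        using y m by (simp add: powr_divide powr_minus field_simps)
      finally have "exp (- real m / y) \<le> 4 * (y powr s * real m powr (-s))" by simp
      then show "a m \<le> 4 * y powr s * (divisor_k (real k) m * real m powr (-s))"
        unfolding a_def using divisor_k_nonneg[OF k, of m]
        by (metis (no_types, lifting) mult.assoc mult.left_commute mult_left_mono)
    qed
    also have "\<dots> = 4 * y powr s * (\<Sum>m=1..N. divisor_k (real k) m * real m powr (-s))"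
      by (simp add: sum_distrib_left)
    also have "\<dots> \<le> 4 * y powr s * (1 + 1/(s-1)) ^ k"
      using dk_dirichlet[OF s1(1) k, of N] y by (intro mult_left_mono) auto
    also have "1 + 1/(s-1) = 1 + L" unfolding s_def using L1 by simp
    finally show ?thesis unfolding B_def .
  qed
  have summ: "summable (\<lambda>m. a (Suc m))"
    by (rule bounded_imp_summable[of _ B]) (use anneg bound in \<open>simp_all only: shift_sum_le\<close>)
  have sle: "(\<Sum>m. a (Suc m)) \<le> B"
    by (rule suminf_le_const[OF summ]) (use bound in \<open>simp_all only: shift_sum_lt\<close>)
  have ys: "y powr s = y * exp 1"
  proof -
    have "y powr s = y powr 1 * y powr (1/L)" unfolding s_def by (simp add: powr_add)
    also have "y powr (1/L) = exp 1" using y L1 unfolding L_def by (simp add: powr_def)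
    finally show ?thesis using y by simp
  qed
  have l3: "1 + L \<le> ln (3 * y)"
  proof -
    have "1 + L = ln (exp 1 * y)" unfolding L_def using y by (simp add: ln_mult)
    also have "\<dots> \<le> ln (3 * y)" using y e3 by (subst ln_le_cancel_iff) auto
    finally show ?thesis .
  qed
  have l31: "1 \<le> ln (3 * y)" using l3 L1 by simp
  have "B = 4 * exp 1 * y * (1 + L) ^ k" unfolding B_def ys by simp
  also have "\<dots> \<le> 12 * y * (1 + L) ^ k" using e3 y L1 by (intro mult_right_mono) auto
  also have "\<dots> \<le> 12 * y * ln (3 * y) ^ k" using y L1 l3 by (intro mult_left_mono power_mono) auto
  also have "\<dots> \<le> 12 * y * ln (3 * y) ^ (k + 2)" using y l31 by (intro mult_left_mono power_increasing) auto
  finally have "B \<le> 12 * y * ln (3 * y) ^ (k + 2)" .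
  then show "(\<Sum>m. divisor_k (real k) (Suc m) * exp (- real (Suc m) / y)) \<le> 12 * y * ln (3 * y) ^ (k + 2)"
    using sle unfolding a_def by simp
  show "summable (\<lambda>m. divisor_k (real k) (Suc m) * exp (- real (Suc m) / y))"
    using summ unfolding a_def by simp
qed simp
end
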